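(* For any trace-free statistical structure $(g,\nabla)$ on $M$ and any $g$-orthonormal frame $e_1,\dots,e_n$ at a point, $$\sum_{i,j=1}^n\nabla^2g(e_i,e_i,e_j,e_j)=g(\nabla g,\nabla g).$$
   Context: A statistical structure is a pair $(g,\nabla)$, $g$ a positive definite Riemannian metric, $\nabla$ torsion-free with $(\nabla_X g)(Y,Z)=(\nabla_Y g)(X,Z)$; it is trace-free if $\nabla\nu_g=0$ ($\nu_g$ the Riemannian volume form). Here $\nabla g(X,Y,Z)=(\nabla_Xg)(Y,Z)$, $\nabla^2g(X,Y,Z,W)=(\nabla_X(\nabla g))(Y,Z,W)$, and $g(\nabla g,\nabla g)=\sum_{i,j,k}\nabla g(e_i,e_j,e_k)^2$. *)

theory Defs
  imports "HOL-Analysis.Analysis"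
begin

text \<open>Local (chart) description of a statistical structure on an open set U of R^n.
  Tangent vectors at a point are vectors in real^'n; the coordinate vector fields are
  axis i 1.  The metric is given by components G x i j = g(d_i,d_j) and the connection by
  Christoffel symbols Gam x i j l, meaning nabla_{d_i} d_j = sum_l Gam x i j l d_l.\<close>

definition pd :: "'n::finite \<Rightarrow> (real^'n \<Rightarrow> real) \<Rightarrow> real^'n \<Rightarrow> real" where
  "pd i f x = frechet_derivative f (at x) (axis i 1)"

text \<open>Components of nabla g: (nabla g)_{ijk} = (nabla_{d_i} g)(d_j,d_k).\<close>
definition nabla_g ::
  "(real^'n \<Rightarrow> 'n::finite \<Rightarrow> 'n \<Rightarrow> real) \<Rightarrow> (real^'n \<Rightarrow> 'n \<Rightarrow> 'n \<Rightarrow> 'n \<Rightarrow> real)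
    \<Rightarrow> real^'n \<Rightarrow> 'n \<Rightarrow> 'n \<Rightarrow> 'n \<Rightarrow> real" where
  "nabla_g G Gam x i j k =
     pd i (\<lambda>y. G y j k) x
     - (\<Sum>l\<in>UNIV. Gam x i j l * G x l k)
     - (\<Sum>l\<in>UNIV. Gam x i k l * G x j l)"

text \<open>Components of nabla^2 g: (nabla^2 g)_{hijk} = (nabla_{d_h}(nabla g))(d_i,d_j,d_k).\<close>
definition nabla2_g ::
  "(real^'n \<Rightarrow> 'n::finite \<Rightarrow> 'n \<Rightarrow> real) \<Rightarrow> (real^'n \<Rightarrow> 'n \<Rightarrow> 'n \<Rightarrow> 'n \<Rightarrow> real)
    \<Rightarrow> real^'n \<Rightarrow> 'n \<Rightarrow> 'n \<Rightarrow> 'n \<Rightarrow> 'n \<Rightarrow> real" where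
  "nabla2_g G Gam x h i j k =
     pd h (\<lambda>y. nabla_g G Gam y i j k) x
     - (\<Sum>l\<in>UNIV. Gam x h i l * nabla_g G Gam x l j k)
     - (\<Sum>l\<in>UNIV. Gam x h j l * nabla_g G Gam x i l k)
     - (\<Sum>l\<in>UNIV. Gam x h k l * nabla_g G Gam x i j l)"

definition ev2 :: "('n::finite \<Rightarrow> 'n \<Rightarrow> real) \<Rightarrow> real^'n \<Rightarrow> real^'n \<Rightarrow> real" where
  "ev2 T X Y = (\<Sum>i\<in>UNIV. \<Sum>j\<in>UNIV. X$i * Y$j * T i j)"

definition ev3 :: "('n::finite \<Rightarrow> 'n \<Rightarrow> 'n \<Rightarrow> real) \<Rightarrow> real^'n \<Rightarrow> real^'n \<Rightarrow> real^'n \<Rightarrow> real" where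
  "ev3 T X Y Z = (\<Sum>i\<in>UNIV. \<Sum>j\<in>UNIV. \<Sum>k\<in>UNIV. X$i * Y$j * Z$k * T i j k)"

definition ev4 :: "('n::finite \<Rightarrow> 'n \<Rightarrow> 'n \<Rightarrow> 'n \<Rightarrow> real)
    \<Rightarrow> real^'n \<Rightarrow> real^'n \<Rightarrow> real^'n \<Rightarrow> real^'n \<Rightarrow> real" where
  "ev4 T W X Y Z = (\<Sum>h\<in>UNIV. \<Sum>i\<in>UNIV. \<Sum>j\<in>UNIV. \<Sum>k\<in>UNIV.
      W$h * X$i * Y$j * Z$k * T h i j k)"

text \<open>Metric matrix and the density of the Riemannian volume form
  nu_g = sqrt(det g) dx^1 \<and> ... \<and> dx^n.\<close>
definition gmat :: "(real^'n \<Rightarrow> 'n::finite \<Rightarrow> 'n \<Rightarrow> real) \<Rightarrow> real^'n \<Rightarrow> real^'n^'n" where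
  "gmat G x = (\<chi> i j. G x i j)"

definition vol_density :: "(real^'n \<Rightarrow> 'n::finite \<Rightarrow> 'n \<Rightarrow> real) \<Rightarrow> real^'n \<Rightarrow> real" where
  "vol_density G x = sqrt (det (gmat G x))"

definition statistical_structure ::
  "(real^'n) set \<Rightarrow> (real^'n \<Rightarrow> 'n::finite \<Rightarrow> 'n \<Rightarrow> real) \<Rightarrow> (real^'n \<Rightarrow> 'n \<Rightarrow> 'n \<Rightarrow> 'n \<Rightarrow> real) \<Rightarrow> bool"
  where
  "statistical_structure U G Gam \<longleftrightarrow>
     open U \<and>
     \<comment> \<open>regularity: g of class (at least) twice differentiable, nabla differentiable\<close>
     (\<forall>x\<in>U. \<forall>j k. (\<lambda>y. G y j k) differentiable (at x)) \<and>
     (\<forall>x\<in>U. \<forall>i j k. (\<lambda>y. pd i (\<lambda>z. G z j k) y) differentiable (at x)) \<and>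
     (\<forall>x\<in>U. \<forall>i j l. (\<lambda>y. Gam y i j l) differentiable (at x)) \<and>
     \<comment> \<open>g is a positive definite Riemannian metric\<close>
     (\<forall>x\<in>U. \<forall>i j. G x i j = G x j i) \<and>
     (\<forall>x\<in>U. \<forall>v::real^'n. v \<noteq> 0 \<longrightarrow> ev2 (G x) v v > 0) \<and>
     \<comment> \<open>nabla is torsion-free\<close>
     (\<forall>x\<in>U. \<forall>i j l. Gam x i j l = Gam x j i l) \<and>
     \<comment> \<open>Codazzi condition (nabla_X g)(Y,Z) = (nabla_Y g)(X,Z)\<close>
     (\<forall>x\<in>U. \<forall>i j k. nabla_g G Gam x i j k = nabla_g G Gam x j i k)"

text \<open>Trace-free: nabla nu_g = 0.  In coordinates,
  nabla_{d_i} (f dx^1\<and>...\<and>dx^n) = (d_i f - f * sum_l Gam^l_{il}) dx^1\<and>...\<and>dx^n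
  with f the density of nu_g.\<close>
definition trace_free ::
  "(real^'n) set \<Rightarrow> (real^'n \<Rightarrow> 'n::finite \<Rightarrow> 'n \<Rightarrow> real) \<Rightarrow> (real^'n \<Rightarrow> 'n \<Rightarrow> 'n \<Rightarrow> 'n \<Rightarrow> real) \<Rightarrow> bool"
  where
  "trace_free U G Gam \<longleftrightarrow>
     (\<forall>x\<in>U. \<forall>i. pd i (vol_density G) x - vol_density G x * (\<Sum>l\<in>UNIV. Gam x i l l) = 0)"

end

theory Submission
  imports Defs
begin

lemma pd_has: "(f has_derivative f') (at x) \<Longrightarrow> pd i f x = f' (axis i 1)"
  unfolding pd_def by (metis frechet_derivative_at)

lemma pd_zero_on:
  assumes "open U" "x \<in> U" "\<And>y. y \<in> U \<Longrightarrow> f y = 0"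
  shows "pd i f x = 0"
proof -
  have "((\<lambda>y. 0::real) has_derivative (\<lambda>h. 0)) (at x)" by simp
  then have "(f has_derivative (\<lambda>h. 0)) (at x)"
    by (rule has_derivative_transform_within_open[OF _ assms(1,2)]) (simp add: assms(3))
  then show ?thesis by (simp add: pd_has)
qed

lemma pd_cong_on:
  assumes "open U" "x \<in> U" "\<And>y. y \<in> U \<Longrightarrow> f y = g y" "f differentiable (at x)"
  shows "pd i f x = pd i g x"
proof -
  have d: "(f has_derivative frechet_derivative f (at x)) (at x)"
    using assms(4) frechet_derivative_works by blast
  then have "(g has_derivative frechet_derivative f (at x)) (at x)"
    by (rule has_derivative_transform_within_open[OF _ assms(1,2)]) (simp add: assms(3))
  then show ?thesis using d by (simp add: pd_has)
qed

lemma pd_works: "f differentiable (at x) \<Longrightarrow> (f has_derivative (\<lambda>h. frechet_derivative f (at x) h)) (at x)"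
  using frechet_derivative_works by (metis)

lemma pd_sum:
  assumes "finite S" "\<And>s. s \<in> S \<Longrightarrow> f s differentiable (at x)"
  shows "pd i (\<lambda>y. \<Sum>s\<in>S. f s y) x = (\<Sum>s\<in>S. pd i (f s) x)"
proof -
  have D: "((\<lambda>y. \<Sum>s\<in>S. f s y) has_derivative (\<lambda>h. \<Sum>s\<in>S. frechet_derivative (f s) (at x) h)) (at x)"
    by (rule has_derivative_sum) (use assms pd_works in blast)
  show ?thesis using pd_has[OF D, of i] by (simp add: pd_def)
qed

lemma pd_mult:
  fixes f g :: "real^'n::finite \<Rightarrow> real"
  assumes "f differentiable (at x)" "g differentiable (at x)"
  shows "pd i (\<lambda>y. f y * g y) x = pd i f x * g x + f x * pd i g x"
proof -
  have D: "((\<lambda>y. f y * g y) has_derivative (\<lambda>h. f x * frechet_derivative g (at x) h + frechet_derivative f (at x) h * g x)) (at x)"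
    by (rule has_derivative_mult) (use assms pd_works in blast)+
  show ?thesis using pd_has[OF D, of i] by (simp add: pd_def)
qed

lemma pd_diff:
  fixes f g :: "real^'n::finite \<Rightarrow> real"
  assumes "f differentiable (at x)" "g differentiable (at x)"
  shows "pd i (\<lambda>y. f y - g y) x = pd i f x - pd i g x"
proof -
  have D: "((\<lambda>y. f y - g y) has_derivative (\<lambda>h. frechet_derivative f (at x) h - frechet_derivative g (at x) h)) (at x)"
    by (rule has_derivative_diff) (use assms pd_works in blast)+
  show ?thesis using pd_has[OF D, of i] by (simp add: pd_def)
qed

lemma prod_if_split:
  fixes a b :: "'n::finite \<Rightarrow> real"
  shows "(\<Prod>i\<in>UNIV. if i = k then a i else b i) = a k * (\<Prod>i\<in>UNIV-{k}. b i)"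
proof -
  have "(\<Prod>i\<in>UNIV. if i = k then a i else b i) = (if k = k then a k else b k) * (\<Prod>i\<in>UNIV-{k}. if i = k then a i else b i)"
    by (rule prod.remove) auto
  also have "(\<Prod>i\<in>UNIV-{k}. if i = k then a i else b i) = (\<Prod>i\<in>UNIV-{k}. b i)"
    by (rule prod.cong) auto
  finally show ?thesis by simp
qed

lemma det_deriv:
  fixes M :: "real^'m::finite \<Rightarrow> 'n::finite \<Rightarrow> 'n \<Rightarrow> real"
  assumes "\<And>r c. ((\<lambda>y. M y r c) has_derivative M' r c) (at x)"
  shows "((\<lambda>y. det (\<chi> r c. M y r c)) has_derivative
     (\<lambda>h. \<Sum>k\<in>UNIV. det (\<chi> r c. if r = k then M' k c h else M x r c))) (at x)"
proof -
  let ?P = "{p. p permutes (UNIV::'n set)}"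
  have "((\<lambda>y. \<Sum>p\<in>?P. of_int (sign p) * (\<Prod>i\<in>UNIV. M y i (p i))) has_derivative
     (\<lambda>h. \<Sum>p\<in>?P. of_int (sign p) * (\<Sum>i\<in>UNIV. M' i (p i) h * (\<Prod>j\<in>UNIV-{i}. M x j (p j))))) (at x)"
    by (intro has_derivative_sum has_derivative_mult_right has_derivative_prod assms)
  moreover have "(\<lambda>h. \<Sum>p\<in>?P. of_int (sign p) * (\<Sum>i\<in>UNIV. M' i (p i) h * (\<Prod>j\<in>UNIV-{i}. M x j (p j))))
     = (\<lambda>h. \<Sum>k\<in>UNIV. det (\<chi> r c. if r = k then M' k c h else M x r c))"
  proof
    fix h
    have "(\<Sum>p\<in>?P. of_int (sign p) * (\<Sum>i\<in>UNIV. M' i (p i) h * (\<Prod>j\<in>UNIV-{i}. M x j (p j))))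
      = (\<Sum>k\<in>UNIV. \<Sum>p\<in>?P. of_int (sign p) * (M' k (p k) h * (\<Prod>j\<in>UNIV-{k}. M x j (p j))))"
      by (simp add: sum_distrib_left sum.swap[of _ ?P])
    also have "\<dots> = (\<Sum>k\<in>UNIV. det (\<chi> r c. if r = k then M' k c h else M x r c))"
      unfolding det_def by (simp add: prod_if_split if_distrib[of "\<lambda>f. f _"] cong: if_cong)
    finally show "(\<Sum>p\<in>?P. of_int (sign p) * (\<Sum>i\<in>UNIV. M' i (p i) h * (\<Prod>j\<in>UNIV-{i}. M x j (p j))))
      = (\<Sum>k\<in>UNIV. det (\<chi> r c. if r = k then M' k c h else M x r c))" .
  qed
  ultimately show ?thesis unfolding det_def by simp
qed


definition detm :: "('n::finite \<Rightarrow> 'n \<Rightarrow> real) \<Rightarrow> real" where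
  "detm M = det ((\<chi> r c. M r c) :: real^'n^'n)"

definition cofm :: "('n::finite \<Rightarrow> 'n \<Rightarrow> real) \<Rightarrow> 'n \<Rightarrow> 'n \<Rightarrow> real" where
  "cofm M k j = det ((\<chi> r c. if r = k then (if c = j then 1 else 0) else M r c) :: real^'n^'n)"

lemma det_row_expand:
  fixes M :: "'n::finite \<Rightarrow> 'n \<Rightarrow> real"
  shows "det ((\<chi> r c. if r = k then v c else M r c) :: real^'n^'n) = (\<Sum>j\<in>UNIV. v j * cofm M k j)"
proof -
  let ?P = "{p. p permutes (UNIV::'n set)}"
  have "(\<Sum>j\<in>UNIV. v j * cofm M k j) =
     (\<Sum>j\<in>UNIV. \<Sum>p\<in>?P. v j * (of_int (sign p) * ((if p k = j then 1 else 0) * (\<Prod>i\<in>UNIV-{k}. M i (p i)))))"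
    unfolding cofm_def det_def by (simp add: prod_if_split if_distrib[of "\<lambda>f. f _"] sum_distrib_left cong: if_cong)
  also have "\<dots> = (\<Sum>p\<in>?P. \<Sum>j\<in>UNIV. v j * (of_int (sign p) * ((if p k = j then 1 else 0) * (\<Prod>i\<in>UNIV-{k}. M i (p i)))))"
    by (rule sum.swap)
  also have "\<dots> = (\<Sum>p\<in>?P. v (p k) * (of_int (sign p) * (\<Prod>i\<in>UNIV-{k}. M i (p i))))"
  proof (rule sum.cong[OF refl])
    fix p :: "'n \<Rightarrow> 'n"
    have "\<And>j. v j * (of_int (sign p) * ((if p k = j then 1 else 0) * (\<Prod>i\<in>UNIV-{k}. M i (p i))))
       = (if p k = j then v (p k) * (of_int (sign p) * (\<Prod>i\<in>UNIV-{k}. M i (p i))) else 0)" by auto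
    then show "(\<Sum>j\<in>UNIV. v j * (of_int (sign p) * ((if p k = j then 1 else 0) * (\<Prod>i\<in>UNIV-{k}. M i (p i)))))
       = v (p k) * (of_int (sign p) * (\<Prod>i\<in>UNIV-{k}. M i (p i)))" by simp
  qed
  also have "\<dots> = det ((\<chi> r c. if r = k then v c else M r c) :: real^'n^'n)"
    unfolding det_def by (simp add: prod_if_split if_distrib[of "\<lambda>f. f _"] cong: if_cong) (simp add: algebra_simps)
  finally show ?thesis by simp
qed

lemma cof_rows:
  fixes M :: "'n::finite \<Rightarrow> 'n \<Rightarrow> real"
  shows "(\<Sum>j\<in>UNIV. M m j * cofm M k j) = (if m = k then detm M else 0)"
proof -
  have e: "(\<Sum>j\<in>UNIV. M m j * cofm M k j) = det ((\<chi> r c. if r = k then M m c else M r c) :: real^'n^'n)"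
    by (simp add: det_row_expand)
  show ?thesis
  proof (cases "m = k")
    case True
    have "((\<chi> r c. if r = k then M m c else M r c) :: real^'n^'n) = (\<chi> r c. M r c)" using True by (simp add: vec_eq_iff)
    then show ?thesis using True e unfolding detm_def by simp
  next
    case False
    have "det ((\<chi> r c. if r = k then M m c else M r c) :: real^'n^'n) = 0"
      by (rule det_identical_rows[of k m]) (use False in \<open>auto simp: row_def vec_eq_iff\<close>)
    then show ?thesis using False e by simp
  qed
qed

lemma left_inv_from_right:
  fixes X Y :: "'n::finite \<Rightarrow> 'n \<Rightarrow> real"
  assumes "\<And>m k. (\<Sum>j\<in>UNIV. X m j * Y j k) = (if m = k then 1 else 0)"
  shows "(\<Sum>k\<in>UNIV. Y j k * X k l) = (if j = l then 1 else 0)"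
proof -
  let ?X = "(\<chi> r c. X r c) :: real^'n^'n"
  let ?Y = "(\<chi> r c. Y r c) :: real^'n^'n"
  have "?X ** ?Y = mat 1"
    using assms by (simp add: matrix_matrix_mult_def mat_def vec_eq_iff)
  then have "?Y ** ?X = mat 1" by (simp add: matrix_left_right_inverse)
  then have "(?Y ** ?X) $ j $ l = mat 1 $ j $ l" by simp
  then show ?thesis by (simp add: matrix_matrix_mult_def mat_def)
qed

lemma posdef_det:
  fixes M :: "'n::finite \<Rightarrow> 'n \<Rightarrow> real"
  assumes "\<forall>v::real^'n. v \<noteq> 0 \<longrightarrow> ev2 M v v > 0"
  shows "detm M \<noteq> 0"
proof
  assume "detm M = 0"
  then have "\<not> invertible ((\<chi> r c. M r c) :: real^'n^'n)"
    unfolding detm_def by (simp add: invertible_det_nz)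
  then have "\<not> (\<exists>B. B ** ((\<chi> r c. M r c) :: real^'n^'n) = mat 1)"
    by (simp add: invertible_left_inverse)
  then obtain v :: "real^'n" where v: "((\<chi> r c. M r c) :: real^'n^'n) *v v = 0" "v \<noteq> 0"
    unfolding matrix_left_invertible_ker by blast
  have "\<And>i. (\<Sum>j\<in>UNIV. M i j * v$j) = 0"
    using v(1) by (simp add: matrix_vector_mult_def vec_eq_iff)
  then have "\<And>i. (\<Sum>j\<in>UNIV. v$j * M i j) = 0" by (simp add: mult.commute)
  then have "ev2 M v v = 0"
    unfolding ev2_def by (simp add: mult.assoc sum_distrib_left[symmetric])
  then show False using assms v(2) by auto
qed


definition Ainv :: "(real^'n \<Rightarrow> 'n::finite \<Rightarrow> 'n \<Rightarrow> real) \<Rightarrow> real^'n \<Rightarrow> 'n \<Rightarrow> 'n \<Rightarrow> real" where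
  "Ainv G y j k = cofm (G y) k j / detm (G y)"

lemma ss_D_nz:
  assumes "statistical_structure U G Gam" "y \<in> U"
  shows "detm (G y) \<noteq> 0"
  by (intro posdef_det) (use assms in \<open>auto simp: statistical_structure_def\<close>)

lemma A_right:
  assumes "statistical_structure U G Gam" "y \<in> U"
  shows "(\<Sum>j\<in>UNIV. G y m j * Ainv G y j k) = (if m = k then 1 else 0)"
proof -
  have "(\<Sum>j\<in>UNIV. G y m j * Ainv G y j k) = (\<Sum>j\<in>UNIV. G y m j * cofm (G y) k j) / detm (G y)"
    unfolding Ainv_def by (simp add: sum_divide_distrib)
  then show ?thesis using cof_rows[of "G y" m k] ss_D_nz[OF assms] by simp
qed

lemma A_left:
  assumes "statistical_structure U G Gam" "y \<in> U"
  shows "(\<Sum>k\<in>UNIV. Ainv G y j k * G y k l) = (if j = l then 1 else 0)"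
  by (rule left_inv_from_right) (rule A_right[OF assms])

lemma vol_eq: "vol_density G = (\<lambda>y. sqrt (detm (G y)))"
  unfolding vol_density_def gmat_def detm_def by simp

lemma D_deriv:
  fixes G :: "real^'m::finite \<Rightarrow> 'n::finite \<Rightarrow> 'n \<Rightarrow> real"
  assumes "\<And>r c. (\<lambda>z. G z r c) differentiable (at y)"
  shows "((\<lambda>z. detm (G z)) has_derivative
     (\<lambda>h. \<Sum>k\<in>UNIV. \<Sum>c\<in>UNIV. frechet_derivative (\<lambda>z. G z k c) (at y) h * cofm (G y) k c)) (at y)"
proof -
  have "((\<lambda>z. det ((\<chi> r c. G z r c) :: real^'n^'n)) has_derivative
     (\<lambda>h. \<Sum>k\<in>UNIV. det ((\<chi> r c. if r = k then frechet_derivative (\<lambda>z. G z k c) (at y) h else G y r c) :: real^'n^'n))) (at y)"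
    by (rule det_deriv) (use assms pd_works in blast)
  then show ?thesis unfolding detm_def det_row_expand .
qed

lemma pd_D:
  fixes G :: "real^'m::finite \<Rightarrow> 'n::finite \<Rightarrow> 'n \<Rightarrow> real"
  assumes "\<And>r c. (\<lambda>z. G z r c) differentiable (at y)"
  shows "pd i (\<lambda>z. detm (G z)) y = (\<Sum>k\<in>UNIV. \<Sum>c\<in>UNIV. pd i (\<lambda>z. G z k c) y * cofm (G y) k c)"
  using pd_has[OF D_deriv[OF assms], of i] by (simp add: pd_def)

lemma pd_G_sym:
  assumes "statistical_structure U G Gam" "y \<in> U"
  shows "pd i (\<lambda>z. G z j k) y = pd i (\<lambda>z. G z k j) y"
  using assms unfolding statistical_structure_def
  by (intro pd_cong_on[of U]) auto

lemma trace_dG: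
  assumes ss: "statistical_structure U G Gam" and tf: "trace_free U G Gam" and y: "y \<in> U"
  shows "(\<Sum>j\<in>UNIV. \<Sum>k\<in>UNIV. Ainv G y j k * pd i (\<lambda>z. G z j k) y) = 2 * (\<Sum>l\<in>UNIV. Gam y i l l)"
proof -
  define D where "D = detm (G y)"
  define S where "S = (\<Sum>l\<in>UNIV. Gam y i l l)"
  define Dp where "Dp = pd i (\<lambda>z. detm (G z)) y"
  have diff: "\<And>r c. (\<lambda>z. G z r c) differentiable (at y)"
    using ss y unfolding statistical_structure_def by auto
  have Dnz: "D \<noteq> 0" unfolding D_def by (rule ss_D_nz[OF ss y])
  define s' where "s' = (if D > 0 then inverse (sqrt D) / 2 else - inverse (sqrt D) / 2)"
  have "DERIV sqrt D :> s'"
    by (rule DERIV_real_sqrt_generic) (use Dnz in \<open>auto simp: s'_def\<close>)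
  then have sq: "(sqrt has_derivative (\<lambda>t. s' * t)) (at (detm (G y)))"
    unfolding D_def by (rule has_field_derivative_imp_has_derivative)
  have dd: "((\<lambda>z. detm (G z)) has_derivative
     (\<lambda>h. \<Sum>k\<in>UNIV. \<Sum>c\<in>UNIV. frechet_derivative (\<lambda>z. G z k c) (at y) h * cofm (G y) k c)) (at y)"
    by (rule D_deriv[OF diff])
  have Dpe: "Dp = (\<Sum>k\<in>UNIV. \<Sum>c\<in>UNIV. frechet_derivative (\<lambda>z. G z k c) (at y) (axis i 1) * cofm (G y) k c)"
    unfolding Dp_def by (rule pd_has[OF dd])
  have "pd i (\<lambda>z. sqrt (detm (G z))) y = s' * Dp"
    unfolding Dpe by (rule pd_has[OF has_derivative_compose[OF dd sq]])
  then have "pd i (vol_density G) y = s' * Dp" unfolding vol_eq .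
  moreover have "pd i (vol_density G) y = sqrt D * S"
    using tf y unfolding trace_free_def D_def S_def vol_eq by auto
  ultimately have e: "s' * Dp = sqrt D * S" by simp
  have Dp2: "Dp = 2 * D * S"
  proof (cases "D > 0")
    case True
    then have "inverse (sqrt D) / 2 * Dp = sqrt D * S" using e by (simp add: s'_def)
    then have "Dp = 2 * (sqrt D * sqrt D) * S" using True by (simp add: field_simps)
    then show ?thesis using True by simp
  next
    case False
    then have D0: "D < 0" using Dnz by simp
    have sq2: "sqrt D * sqrt D = - D" using D0 real_sqrt_mult_self[of D] by simp
    have "- inverse (sqrt D) / 2 * Dp = sqrt D * S" using e D0 by (simp add: s'_def)
    then have "- Dp = 2 * (sqrt D * sqrt D) * S" using D0 by (simp add: field_simps)
    then show ?thesis unfolding sq2 by simp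
  qed
  have "Dp = (\<Sum>k\<in>UNIV. \<Sum>c\<in>UNIV. pd i (\<lambda>z. G z k c) y * cofm (G y) k c)"
    unfolding Dp_def by (rule pd_D[OF diff])
  also have "\<dots> = (\<Sum>k\<in>UNIV. \<Sum>c\<in>UNIV. D * (Ainv G y c k * pd i (\<lambda>z. G z c k) y))"
  proof (intro sum.cong refl)
    fix k c
    show "pd i (\<lambda>z. G z k c) y * cofm (G y) k c = D * (Ainv G y c k * pd i (\<lambda>z. G z c k) y)"
      unfolding Ainv_def D_def using Dnz[unfolded D_def] pd_G_sym[OF ss y, of i k c] by simp
  qed
  also have "\<dots> = D * (\<Sum>k\<in>UNIV. \<Sum>c\<in>UNIV. Ainv G y c k * pd i (\<lambda>z. G z c k) y)"
    by (simp add: sum_distrib_left)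
  also have "\<dots> = D * (\<Sum>j\<in>UNIV. \<Sum>k\<in>UNIV. Ainv G y j k * pd i (\<lambda>z. G z j k) y)"
    by (subst sum.swap) (rule refl)
  finally show ?thesis using Dp2 Dnz unfolding S_def by simp
qed

lemma trace_T:
  assumes ss: "statistical_structure U G Gam" and tf: "trace_free U G Gam" and y: "y \<in> U"
  shows "(\<Sum>j\<in>UNIV. \<Sum>k\<in>UNIV. Ainv G y j k * nabla_g G Gam y i j k) = 0"
proof -
  have Gs: "\<And>a b. G y a b = G y b a" using ss y unfolding statistical_structure_def by blast
  have Al: "\<And>j l. (\<Sum>k\<in>UNIV. Ainv G y j k * G y l k) = (if j = l then 1 else 0)"
  proof -
    fix j l
    have "(\<Sum>k\<in>UNIV. Ainv G y j k * G y l k) = (\<Sum>k\<in>UNIV. Ainv G y j k * G y k l)"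
      by (intro sum.cong refl) (metis Gs)
    then show "(\<Sum>k\<in>UNIV. Ainv G y j k * G y l k) = (if j = l then 1 else 0)" using A_left[OF ss y] by simp
  qed
  have Ar: "\<And>l k. (\<Sum>j\<in>UNIV. Ainv G y j k * G y j l) = (if l = k then 1 else 0)"
  proof -
    fix k l
    have "(\<Sum>j\<in>UNIV. Ainv G y j k * G y j l) = (\<Sum>j\<in>UNIV. G y l j * Ainv G y j k)"
      by (intro sum.cong refl) (metis Gs mult.commute)
    then show "(\<Sum>j\<in>UNIV. Ainv G y j k * G y j l) = (if l = k then 1 else 0)" using A_right[OF ss y] by simp
  qed
  have t2: "(\<Sum>j\<in>UNIV. \<Sum>k\<in>UNIV. Ainv G y j k * (\<Sum>l\<in>UNIV. Gam y i j l * G y l k)) = (\<Sum>j\<in>UNIV. Gam y i j j)"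
  proof -
    have "(\<Sum>j\<in>UNIV. \<Sum>k\<in>UNIV. Ainv G y j k * (\<Sum>l\<in>UNIV. Gam y i j l * G y l k))
       = (\<Sum>j\<in>UNIV. \<Sum>k\<in>UNIV. \<Sum>l\<in>UNIV. Gam y i j l * (Ainv G y j k * G y l k))"
      by (simp add: sum_distrib_left mult_ac)
    also have "\<dots> = (\<Sum>j\<in>UNIV. \<Sum>l\<in>UNIV. \<Sum>k\<in>UNIV. Gam y i j l * (Ainv G y j k * G y l k))"
      by (rule sum.cong[OF refl], rule sum.swap)
    also have "\<dots> = (\<Sum>j\<in>UNIV. \<Sum>l\<in>UNIV. Gam y i j l * (\<Sum>k\<in>UNIV. Ainv G y j k * G y l k))"
      by (simp add: sum_distrib_left)
    also have "\<dots> = (\<Sum>j\<in>UNIV. Gam y i j j)"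
      by (simp add: Al if_distrib[of "\<lambda>x. _ * x"] cong: if_cong)
    finally show ?thesis .
  qed
  have t3: "(\<Sum>j\<in>UNIV. \<Sum>k\<in>UNIV. Ainv G y j k * (\<Sum>l\<in>UNIV. Gam y i k l * G y j l)) = (\<Sum>k\<in>UNIV. Gam y i k k)"
  proof -
    have "(\<Sum>j\<in>UNIV. \<Sum>k\<in>UNIV. Ainv G y j k * (\<Sum>l\<in>UNIV. Gam y i k l * G y j l))
       = (\<Sum>j\<in>UNIV. \<Sum>k\<in>UNIV. \<Sum>l\<in>UNIV. Gam y i k l * (Ainv G y j k * G y j l))"
      by (simp add: sum_distrib_left mult_ac)
    also have "\<dots> = (\<Sum>k\<in>UNIV. \<Sum>j\<in>UNIV. \<Sum>l\<in>UNIV. Gam y i k l * (Ainv G y j k * G y j l))"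
      by (rule sum.swap)
    also have "\<dots> = (\<Sum>k\<in>UNIV. \<Sum>l\<in>UNIV. \<Sum>j\<in>UNIV. Gam y i k l * (Ainv G y j k * G y j l))"
      by (rule sum.cong[OF refl], rule sum.swap)
    also have "\<dots> = (\<Sum>k\<in>UNIV. \<Sum>l\<in>UNIV. Gam y i k l * (\<Sum>j\<in>UNIV. Ainv G y j k * G y j l))"
      by (simp add: sum_distrib_left)
    also have "\<dots> = (\<Sum>k\<in>UNIV. Gam y i k k)"
      by (simp add: Ar if_distrib[of "\<lambda>x. _ * x"] cong: if_cong)
    finally show ?thesis .
  qed
  have "(\<Sum>j\<in>UNIV. \<Sum>k\<in>UNIV. Ainv G y j k * nabla_g G Gam y i j k)
     = (\<Sum>j\<in>UNIV. \<Sum>k\<in>UNIV. Ainv G y j k * pd i (\<lambda>z. G z j k) y)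
       - (\<Sum>j\<in>UNIV. \<Sum>k\<in>UNIV. Ainv G y j k * (\<Sum>l\<in>UNIV. Gam y i j l * G y l k))
       - (\<Sum>j\<in>UNIV. \<Sum>k\<in>UNIV. Ainv G y j k * (\<Sum>l\<in>UNIV. Gam y i k l * G y j l))"
    unfolding nabla_g_def by (simp add: right_diff_distrib sum_subtractf)
  also have "\<dots> = 0" unfolding t2 t3 trace_dG[OF ss tf y] by simp
  finally show ?thesis .
qed


lemma key_alg:
  fixes a g :: "'n::finite \<Rightarrow> 'n \<Rightarrow> real"
    and c dA dg pdC N Gm :: "'n \<Rightarrow> 'n \<Rightarrow> 'n \<Rightarrow> _"
  assumes dT: "\<And>h i. (\<Sum>j\<in>UNIV. \<Sum>k\<in>UNIV. dA h j k * c i j k + a j k * pdC h i j k) = 0"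
    and dAf: "\<And>h j k. dA h j k = - (\<Sum>m\<in>UNIV. \<Sum>n\<in>UNIV. a j m * dg h m n * a n k)"
    and dgf: "\<And>h m n. dg h m n = c h m n + (\<Sum>l\<in>UNIV. Gm h m l * g l n) + (\<Sum>l\<in>UNIV. Gm h n l * g m l)"
    and gA: "\<And>l k. (\<Sum>n\<in>UNIV. g l n * a n k) = (if l = k then 1 else 0)"
    and Ag: "\<And>j l. (\<Sum>m\<in>UNIV. a j m * g m l) = (if j = l then 1 else 0)"
    and T0: "\<And>l. (\<Sum>j\<in>UNIV. \<Sum>k\<in>UNIV. a j k * c l j k) = 0"
    and Nf: "\<And>h i j k. N h i j k = pdC h i j k - (\<Sum>l\<in>UNIV. Gm h i l * c l j k)
               - (\<Sum>l\<in>UNIV. Gm h j l * c i l k) - (\<Sum>l\<in>UNIV. Gm h k l * c i j l)"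
  shows "(\<Sum>j\<in>UNIV. \<Sum>k\<in>UNIV. a j k * N h i j k :: real)
       = (\<Sum>j\<in>UNIV. \<Sum>k\<in>UNIV. \<Sum>m\<in>UNIV. \<Sum>n\<in>UNIV. a j m * c h m n * a n k * c i j k)"
proof -
  define X where "X = (\<Sum>j\<in>UNIV. \<Sum>k\<in>UNIV. \<Sum>m\<in>UNIV. \<Sum>n\<in>UNIV. a j m * c h m n * a n k * c i j k)"
  define Y where "Y = (\<Sum>j\<in>UNIV. \<Sum>k\<in>UNIV. a j k * (\<Sum>l\<in>UNIV. Gm h k l * c i j l))"
  define Z where "Z = (\<Sum>j\<in>UNIV. \<Sum>k\<in>UNIV. a j k * (\<Sum>l\<in>UNIV. Gm h j l * c i l k))"
  have Yin: "(\<Sum>n\<in>UNIV. a j m * (\<Sum>l\<in>UNIV. Gm h m l * g l n) * a n k * c i j k) = a j m * Gm h m k * c i j k" for j k m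
  proof -
    have "(\<Sum>n\<in>UNIV. a j m * (\<Sum>l\<in>UNIV. Gm h m l * g l n) * a n k * c i j k)
        = a j m * c i j k * (\<Sum>n\<in>UNIV. \<Sum>l\<in>UNIV. Gm h m l * (g l n * a n k))"
      by (simp add: sum_distrib_left sum_distrib_right mult_ac)
    also have "\<dots> = a j m * c i j k * (\<Sum>l\<in>UNIV. \<Sum>n\<in>UNIV. Gm h m l * (g l n * a n k))"
      by (subst sum.swap) (rule refl)
    also have "\<dots> = a j m * c i j k * (\<Sum>l\<in>UNIV. Gm h m l * (\<Sum>n\<in>UNIV. g l n * a n k))"
      by (simp add: sum_distrib_left)
    also have "\<dots> = a j m * Gm h m k * c i j k"
      by (simp add: gA if_distrib[of "\<lambda>x. _ * x"] cong: if_cong)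
    finally show ?thesis .
  qed
  have Zin: "(\<Sum>m\<in>UNIV. a j m * (\<Sum>l\<in>UNIV. Gm h n l * g m l) * a n k * c i j k) = Gm h n j * a n k * c i j k" for j k n
  proof -
    have "(\<Sum>m\<in>UNIV. a j m * (\<Sum>l\<in>UNIV. Gm h n l * g m l) * a n k * c i j k)
        = a n k * c i j k * (\<Sum>m\<in>UNIV. \<Sum>l\<in>UNIV. Gm h n l * (a j m * g m l))"
      by (simp add: sum_distrib_left sum_distrib_right mult_ac)
    also have "\<dots> = a n k * c i j k * (\<Sum>l\<in>UNIV. \<Sum>m\<in>UNIV. Gm h n l * (a j m * g m l))"
      by (subst sum.swap) (rule refl)
    also have "\<dots> = a n k * c i j k * (\<Sum>l\<in>UNIV. Gm h n l * (\<Sum>m\<in>UNIV. a j m * g m l))"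
      by (simp add: sum_distrib_left)
    also have "\<dots> = Gm h n j * a n k * c i j k"
      by (simp add: Ag if_distrib[of "\<lambda>x. _ * x"] cong: if_cong)
    finally show ?thesis .
  qed
  have Ysum: "(\<Sum>j\<in>UNIV. \<Sum>k\<in>UNIV. \<Sum>m\<in>UNIV. \<Sum>n\<in>UNIV. a j m * (\<Sum>l\<in>UNIV. Gm h m l * g l n) * a n k * c i j k) = Y"
  proof -
    have "(\<Sum>j\<in>UNIV. \<Sum>k\<in>UNIV. \<Sum>m\<in>UNIV. \<Sum>n\<in>UNIV. a j m * (\<Sum>l\<in>UNIV. Gm h m l * g l n) * a n k * c i j k)
       = (\<Sum>j\<in>UNIV. \<Sum>k\<in>UNIV. \<Sum>m\<in>UNIV. a j m * Gm h m k * c i j k)"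
      by (simp add: Yin)
    also have "\<dots> = (\<Sum>j\<in>UNIV. \<Sum>m\<in>UNIV. \<Sum>k\<in>UNIV. a j m * Gm h m k * c i j k)"
      by (rule sum.cong[OF refl], rule sum.swap)
    also have "\<dots> = Y" unfolding Y_def by (simp add: sum_distrib_left mult_ac)
    finally show ?thesis .
  qed
  have Zsum: "(\<Sum>j\<in>UNIV. \<Sum>k\<in>UNIV. \<Sum>m\<in>UNIV. \<Sum>n\<in>UNIV. a j m * (\<Sum>l\<in>UNIV. Gm h n l * g m l) * a n k * c i j k) = Z"
  proof -
    have "(\<Sum>j\<in>UNIV. \<Sum>k\<in>UNIV. \<Sum>m\<in>UNIV. \<Sum>n\<in>UNIV. a j m * (\<Sum>l\<in>UNIV. Gm h n l * g m l) * a n k * c i j k)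
       = (\<Sum>j\<in>UNIV. \<Sum>k\<in>UNIV. \<Sum>n\<in>UNIV. \<Sum>m\<in>UNIV. a j m * (\<Sum>l\<in>UNIV. Gm h n l * g m l) * a n k * c i j k)"
      by (rule sum.cong[OF refl], rule sum.cong[OF refl], rule sum.swap)
    also have "\<dots> = (\<Sum>j\<in>UNIV. \<Sum>k\<in>UNIV. \<Sum>n\<in>UNIV. Gm h n j * a n k * c i j k)"
      by (simp add: Zin)
    also have "\<dots> = (\<Sum>k\<in>UNIV. \<Sum>j\<in>UNIV. \<Sum>n\<in>UNIV. Gm h n j * a n k * c i j k)"
      by (rule sum.swap)
    also have "\<dots> = (\<Sum>k\<in>UNIV. \<Sum>n\<in>UNIV. \<Sum>j\<in>UNIV. Gm h n j * a n k * c i j k)"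
      by (rule sum.cong[OF refl], rule sum.swap)
    also have "\<dots> = (\<Sum>n\<in>UNIV. \<Sum>k\<in>UNIV. \<Sum>j\<in>UNIV. Gm h n j * a n k * c i j k)"
      by (rule sum.swap)
    also have "\<dots> = Z" unfolding Z_def by (simp add: sum_distrib_left mult_ac)
    finally show ?thesis .
  qed
  have A: "(\<Sum>j\<in>UNIV. \<Sum>k\<in>UNIV. a j k * pdC h i j k) = X + Y + Z"
  proof -
    have "(\<Sum>j\<in>UNIV. \<Sum>k\<in>UNIV. a j k * pdC h i j k) = - (\<Sum>j\<in>UNIV. \<Sum>k\<in>UNIV. dA h j k * c i j k)"
      using dT[of h i] by (simp add: sum.distrib add_eq_0_iff)
    also have "\<dots> = (\<Sum>j\<in>UNIV. \<Sum>k\<in>UNIV. \<Sum>m\<in>UNIV. \<Sum>n\<in>UNIV. a j m * dg h m n * a n k * c i j k)"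
      by (simp add: dAf sum_distrib_right sum_negf)
    also have "\<dots> = X
       + (\<Sum>j\<in>UNIV. \<Sum>k\<in>UNIV. \<Sum>m\<in>UNIV. \<Sum>n\<in>UNIV. a j m * (\<Sum>l\<in>UNIV. Gm h m l * g l n) * a n k * c i j k)
       + (\<Sum>j\<in>UNIV. \<Sum>k\<in>UNIV. \<Sum>m\<in>UNIV. \<Sum>n\<in>UNIV. a j m * (\<Sum>l\<in>UNIV. Gm h n l * g m l) * a n k * c i j k)"
      unfolding X_def dgf by (simp add: sum.distrib algebra_simps)
    finally show ?thesis unfolding Ysum Zsum .
  qed
  have B: "(\<Sum>j\<in>UNIV. \<Sum>k\<in>UNIV. a j k * (\<Sum>l\<in>UNIV. Gm h i l * c l j k)) = 0"
  proof -
    have "(\<Sum>j\<in>UNIV. \<Sum>k\<in>UNIV. a j k * (\<Sum>l\<in>UNIV. Gm h i l * c l j k))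
       = (\<Sum>j\<in>UNIV. \<Sum>k\<in>UNIV. \<Sum>l\<in>UNIV. Gm h i l * (a j k * c l j k))"
      by (simp add: sum_distrib_left mult_ac)
    also have "\<dots> = (\<Sum>j\<in>UNIV. \<Sum>l\<in>UNIV. \<Sum>k\<in>UNIV. Gm h i l * (a j k * c l j k))"
      by (rule sum.cong[OF refl], rule sum.swap)
    also have "\<dots> = (\<Sum>l\<in>UNIV. \<Sum>j\<in>UNIV. \<Sum>k\<in>UNIV. Gm h i l * (a j k * c l j k))"
      by (rule sum.swap)
    also have "\<dots> = (\<Sum>l\<in>UNIV. Gm h i l * (\<Sum>j\<in>UNIV. \<Sum>k\<in>UNIV. a j k * c l j k))"
      by (simp add: sum_distrib_left)
    also have "\<dots> = 0" by (simp add: T0)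
    finally show ?thesis .
  qed
  have "(\<Sum>j\<in>UNIV. \<Sum>k\<in>UNIV. a j k * N h i j k)
     = (\<Sum>j\<in>UNIV. \<Sum>k\<in>UNIV. a j k * pdC h i j k)
       - (\<Sum>j\<in>UNIV. \<Sum>k\<in>UNIV. a j k * (\<Sum>l\<in>UNIV. Gm h i l * c l j k)) - Z - Y"
    unfolding Nf Y_def Z_def by (simp add: right_diff_distrib sum_subtractf)
  also have "\<dots> = X" unfolding A B by simp
  finally show ?thesis unfolding X_def .
qed


lemma pull2: "(\<Sum>a\<in>A. \<Sum>x\<in>X. \<Sum>y\<in>Y. f a x y) = (\<Sum>x\<in>X. \<Sum>y\<in>Y. \<Sum>a\<in>A. f a x y)"
proof -
  have "(\<Sum>a\<in>A. \<Sum>x\<in>X. \<Sum>y\<in>Y. f a x y) = (\<Sum>x\<in>X. \<Sum>a\<in>A. \<Sum>y\<in>Y. f a x y)" by (rule sum.swap)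
  also have "\<dots> = (\<Sum>x\<in>X. \<Sum>y\<in>Y. \<Sum>a\<in>A. f a x y)" by (rule sum.cong[OF refl], rule sum.swap)
  finally show ?thesis .
qed

lemma pull3: "(\<Sum>a\<in>A. \<Sum>x\<in>X. \<Sum>y\<in>Y. \<Sum>z\<in>Z. f a x y z) = (\<Sum>x\<in>X. \<Sum>y\<in>Y. \<Sum>z\<in>Z. \<Sum>a\<in>A. f a x y z)"
proof -
  have "(\<Sum>a\<in>A. \<Sum>x\<in>X. \<Sum>y\<in>Y. \<Sum>z\<in>Z. f a x y z) = (\<Sum>x\<in>X. \<Sum>a\<in>A. \<Sum>y\<in>Y. \<Sum>z\<in>Z. f a x y z)" by (rule sum.swap)
  also have "\<dots> = (\<Sum>x\<in>X. \<Sum>y\<in>Y. \<Sum>z\<in>Z. \<Sum>a\<in>A. f a x y z)" by (rule sum.cong[OF refl], rule pull2)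
  finally show ?thesis .
qed

lemma pull4: "(\<Sum>a\<in>A. \<Sum>x\<in>X. \<Sum>y\<in>Y. \<Sum>z\<in>Z. \<Sum>w\<in>W. f a x y z w) = (\<Sum>x\<in>X. \<Sum>y\<in>Y. \<Sum>z\<in>Z. \<Sum>w\<in>W. \<Sum>a\<in>A. f a x y z w)"
proof -
  have "(\<Sum>a\<in>A. \<Sum>x\<in>X. \<Sum>y\<in>Y. \<Sum>z\<in>Z. \<Sum>w\<in>W. f a x y z w) = (\<Sum>x\<in>X. \<Sum>a\<in>A. \<Sum>y\<in>Y. \<Sum>z\<in>Z. \<Sum>w\<in>W. f a x y z w)" by (rule sum.swap)
  also have "\<dots> = (\<Sum>x\<in>X. \<Sum>y\<in>Y. \<Sum>z\<in>Z. \<Sum>w\<in>W. \<Sum>a\<in>A. f a x y z w)" by (rule sum.cong[OF refl], rule pull3)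
  finally show ?thesis .
qed

lemma pull5: "(\<Sum>a\<in>A. \<Sum>x\<in>X. \<Sum>y\<in>Y. \<Sum>z\<in>Z. \<Sum>w\<in>W. \<Sum>v\<in>V. f a x y z w v) = (\<Sum>x\<in>X. \<Sum>y\<in>Y. \<Sum>z\<in>Z. \<Sum>w\<in>W. \<Sum>v\<in>V. \<Sum>a\<in>A. f a x y z w v)"
proof -
  have "(\<Sum>a\<in>A. \<Sum>x\<in>X. \<Sum>y\<in>Y. \<Sum>z\<in>Z. \<Sum>w\<in>W. \<Sum>v\<in>V. f a x y z w v) = (\<Sum>x\<in>X. \<Sum>a\<in>A. \<Sum>y\<in>Y. \<Sum>z\<in>Z. \<Sum>w\<in>W. \<Sum>v\<in>V. f a x y z w v)" by (rule sum.swap)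
  also have "\<dots> = (\<Sum>x\<in>X. \<Sum>y\<in>Y. \<Sum>z\<in>Z. \<Sum>w\<in>W. \<Sum>v\<in>V. \<Sum>a\<in>A. f a x y z w v)" by (rule sum.cong[OF refl], rule pull4)
  finally show ?thesis .
qed

lemma pull6: "(\<Sum>a\<in>A. \<Sum>x\<in>X. \<Sum>y\<in>Y. \<Sum>z\<in>Z. \<Sum>w\<in>W. \<Sum>v\<in>V. \<Sum>u\<in>U. f a x y z w v u) = (\<Sum>x\<in>X. \<Sum>y\<in>Y. \<Sum>z\<in>Z. \<Sum>w\<in>W. \<Sum>v\<in>V. \<Sum>u\<in>U. \<Sum>a\<in>A. f a x y z w v u)"
proof -
  have "(\<Sum>a\<in>A. \<Sum>x\<in>X. \<Sum>y\<in>Y. \<Sum>z\<in>Z. \<Sum>w\<in>W. \<Sum>v\<in>V. \<Sum>u\<in>U. f a x y z w v u) = (\<Sum>x\<in>X. \<Sum>a\<in>A. \<Sum>y\<in>Y. \<Sum>z\<in>Z. \<Sum>w\<in>W. \<Sum>v\<in>V. \<Sum>u\<in>U. f a x y z w v u)" by (rule sum.swap)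
  also have "\<dots> = (\<Sum>x\<in>X. \<Sum>y\<in>Y. \<Sum>z\<in>Z. \<Sum>w\<in>W. \<Sum>v\<in>V. \<Sum>u\<in>U. \<Sum>a\<in>A. f a x y z w v u)" by (rule sum.cong[OF refl], rule pull5)
  finally show ?thesis .
qed

lemma fac: "(\<Sum>a\<in>S. f a * (X::real)) = (\<Sum>a\<in>S. f a) * X"
  by (simp add: sum_distrib_right)

lemma frame_alg:
  fixes e :: "'i::finite \<Rightarrow> real^'n::finite" and A :: "'n \<Rightarrow> 'n \<Rightarrow> real"
    and N :: "'n \<Rightarrow> 'n \<Rightarrow> 'n \<Rightarrow> 'n \<Rightarrow> real" and C :: "'n \<Rightarrow> 'n \<Rightarrow> 'n \<Rightarrow> real"
  assumes EE: "\<And>i j. (\<Sum>a\<in>UNIV. e a $ i * e a $ j) = A i j"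
    and Asym: "\<And>i j. A i j = A j i"
    and key: "\<And>h i. (\<Sum>j\<in>UNIV. \<Sum>k\<in>UNIV. A j k * N h i j k)
       = (\<Sum>j\<in>UNIV. \<Sum>k\<in>UNIV. \<Sum>m\<in>UNIV. \<Sum>n\<in>UNIV. A j m * C h m n * A n k * C i j k)"
  shows "(\<Sum>a\<in>UNIV. \<Sum>b\<in>UNIV. ev4 N (e a) (e a) (e b) (e b))
       = (\<Sum>a\<in>UNIV. \<Sum>b\<in>UNIV. \<Sum>c\<in>UNIV. (ev3 C (e a) (e b) (e c))^2)"
proof -
  let ?F = "\<lambda>a b h i j k. e a $ h * e a $ i * e b $ j * e b $ k * N h i j k"
  have "(\<Sum>a\<in>UNIV. \<Sum>b\<in>UNIV. ev4 N (e a) (e a) (e b) (e b))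
      = (\<Sum>a\<in>UNIV. \<Sum>b\<in>UNIV. \<Sum>h\<in>UNIV. \<Sum>i\<in>UNIV. \<Sum>j\<in>UNIV. \<Sum>k\<in>UNIV. ?F a b h i j k)"
    unfolding ev4_def ..
  also have "\<dots> = (\<Sum>a\<in>UNIV. \<Sum>h\<in>UNIV. \<Sum>i\<in>UNIV. \<Sum>j\<in>UNIV. \<Sum>k\<in>UNIV. \<Sum>b\<in>UNIV. ?F a b h i j k)"
    by (rule sum.cong[OF refl], rule pull4)
  also have "\<dots> = (\<Sum>h\<in>UNIV. \<Sum>i\<in>UNIV. \<Sum>j\<in>UNIV. \<Sum>k\<in>UNIV. \<Sum>a\<in>UNIV. \<Sum>b\<in>UNIV. ?F a b h i j k)"
    by (rule pull4)
  also have "\<dots> = (\<Sum>h\<in>UNIV. \<Sum>i\<in>UNIV. \<Sum>j\<in>UNIV. \<Sum>k\<in>UNIV. A h i * A j k * N h i j k)"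
  proof (intro sum.cong refl)
    fix h i j k
    have "(\<Sum>a\<in>UNIV. \<Sum>b\<in>UNIV. ?F a b h i j k) = (\<Sum>a\<in>UNIV. (e a $ h * e a $ i) * (\<Sum>b\<in>UNIV. (e b $ j * e b $ k) * N h i j k))"
      by (simp add: sum_distrib_left mult_ac)
    also have "\<dots> = A h i * (A j k * N h i j k)"
      by (simp add: fac EE)
    finally show "(\<Sum>a\<in>UNIV. \<Sum>b\<in>UNIV. ?F a b h i j k) = A h i * A j k * N h i j k" by simp
  qed
  also have "\<dots> = (\<Sum>h\<in>UNIV. \<Sum>i\<in>UNIV. A h i * (\<Sum>j\<in>UNIV. \<Sum>k\<in>UNIV. A j k * N h i j k))"
    by (simp add: sum_distrib_left mult_ac)
  also have "\<dots> = (\<Sum>h\<in>UNIV. \<Sum>i\<in>UNIV. \<Sum>j\<in>UNIV. \<Sum>k\<in>UNIV. \<Sum>m\<in>UNIV. \<Sum>n\<in>UNIV.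
        A h i * A m j * A n k * C h m n * C i j k)"
    by (simp add: key sum_distrib_left mult_ac Asym[of j m for j m])
  also have "\<dots> = (\<Sum>h\<in>UNIV. \<Sum>i\<in>UNIV. \<Sum>m\<in>UNIV. \<Sum>n\<in>UNIV. \<Sum>j\<in>UNIV. \<Sum>k\<in>UNIV.
        A h i * A m j * A n k * C h m n * C i j k)"
  proof -
    have inner: "(\<Sum>j\<in>UNIV. \<Sum>k\<in>UNIV. \<Sum>m\<in>UNIV. \<Sum>n\<in>UNIV. A h i * A m j * A n k * C h m n * C i j k)
      = (\<Sum>m\<in>UNIV. \<Sum>n\<in>UNIV. \<Sum>j\<in>UNIV. \<Sum>k\<in>UNIV. A h i * A m j * A n k * C h m n * C i j k)" for h i
      by (subst pull3, subst pull3, rule refl)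
    show ?thesis by (rule sum.cong[OF refl], rule sum.cong[OF refl], rule inner)
  qed
  also have "\<dots> = (\<Sum>h\<in>UNIV. \<Sum>m\<in>UNIV. \<Sum>n\<in>UNIV. \<Sum>i\<in>UNIV. \<Sum>j\<in>UNIV. \<Sum>k\<in>UNIV.
        A h i * A m j * A n k * C h m n * C i j k)"
    by (rule sum.cong[OF refl], rule pull2)
  finally have L: "(\<Sum>a\<in>UNIV. \<Sum>b\<in>UNIV. ev4 N (e a) (e a) (e b) (e b)) = (\<Sum>h\<in>UNIV. \<Sum>m\<in>UNIV. \<Sum>n\<in>UNIV. \<Sum>i\<in>UNIV. \<Sum>j\<in>UNIV. \<Sum>k\<in>UNIV.
        A h i * A m j * A n k * C h m n * C i j k)" .
  let ?G = "\<lambda>a b c h m n i j k. e a $ i * e b $ j * e c $ k * C i j k * (e a $ h * e b $ m * e c $ n * C h m n)"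
  have "(\<Sum>a\<in>UNIV. \<Sum>b\<in>UNIV. \<Sum>c\<in>UNIV. (ev3 C (e a) (e b) (e c))^2)
      = (\<Sum>a\<in>UNIV. \<Sum>b\<in>UNIV. \<Sum>c\<in>UNIV. \<Sum>h\<in>UNIV. \<Sum>m\<in>UNIV. \<Sum>n\<in>UNIV. \<Sum>i\<in>UNIV. \<Sum>j\<in>UNIV. \<Sum>k\<in>UNIV. ?G a b c h m n i j k)"
    unfolding ev3_def power2_eq_square by (simp add: sum_distrib_left sum_distrib_right)
  also have "\<dots> = (\<Sum>a\<in>UNIV. \<Sum>b\<in>UNIV. \<Sum>h\<in>UNIV. \<Sum>m\<in>UNIV. \<Sum>n\<in>UNIV. \<Sum>i\<in>UNIV. \<Sum>j\<in>UNIV. \<Sum>k\<in>UNIV. \<Sum>c\<in>UNIV. ?G a b c h m n i j k)"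
    by (rule sum.cong[OF refl], rule sum.cong[OF refl], rule pull6)
  also have "\<dots> = (\<Sum>a\<in>UNIV. \<Sum>h\<in>UNIV. \<Sum>m\<in>UNIV. \<Sum>n\<in>UNIV. \<Sum>i\<in>UNIV. \<Sum>j\<in>UNIV. \<Sum>k\<in>UNIV. \<Sum>b\<in>UNIV. \<Sum>c\<in>UNIV. ?G a b c h m n i j k)"
    by (rule sum.cong[OF refl], rule pull6)
  also have "\<dots> = (\<Sum>h\<in>UNIV. \<Sum>m\<in>UNIV. \<Sum>n\<in>UNIV. \<Sum>i\<in>UNIV. \<Sum>j\<in>UNIV. \<Sum>k\<in>UNIV. \<Sum>a\<in>UNIV. \<Sum>b\<in>UNIV. \<Sum>c\<in>UNIV. ?G a b c h m n i j k)"
    by (rule pull6)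
  also have "\<dots> = (\<Sum>h\<in>UNIV. \<Sum>m\<in>UNIV. \<Sum>n\<in>UNIV. \<Sum>i\<in>UNIV. \<Sum>j\<in>UNIV. \<Sum>k\<in>UNIV.
        A h i * A m j * A n k * C h m n * C i j k)"
  proof (intro sum.cong refl)
    fix h m n i j k
    have "(\<Sum>a\<in>UNIV. \<Sum>b\<in>UNIV. \<Sum>c\<in>UNIV. ?G a b c h m n i j k)
        = (\<Sum>a\<in>UNIV. (e a $ h * e a $ i) * (\<Sum>b\<in>UNIV. (e b $ m * e b $ j) * (\<Sum>c\<in>UNIV. (e c $ n * e c $ k) * (C h m n * C i j k))))"
      by (simp add: sum_distrib_left mult_ac)
    also have "\<dots> = A h i * (A m j * (A n k * (C h m n * C i j k)))"
      by (simp add: fac EE)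
    finally show "(\<Sum>a\<in>UNIV. \<Sum>b\<in>UNIV. \<Sum>c\<in>UNIV. ?G a b c h m n i j k) = A h i * A m j * A n k * C h m n * C i j k"
      by (simp add: mult_ac)
  qed
  finally show ?thesis using L by simp
qed


lemma cof_diff:
  fixes G :: "real^'m::finite \<Rightarrow> 'n::finite \<Rightarrow> 'n \<Rightarrow> real"
  assumes "\<And>r c. (\<lambda>z. G z r c) differentiable (at y)"
  shows "(\<lambda>z. cofm (G z) k j) differentiable (at y)"
proof -
  have "((\<lambda>z. if r = k then (if c = j then 1 else 0) else G z r c) has_derivative
      (if r = k then (\<lambda>h. 0) else frechet_derivative (\<lambda>z. G z r c) (at y))) (at y)" for r c
  proof (cases "r = k")
    case True
    then show ?thesis by simp
  next
    case False
    then show ?thesis using pd_works[OF assms[of r c]] by simp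
  qed
  from det_deriv[of "\<lambda>z r c. if r = k then (if c = j then 1 else 0) else G z r c", OF this]
  show ?thesis unfolding cofm_def by (rule differentiableI)
qed

lemma detm_diff:
  fixes G :: "real^'m::finite \<Rightarrow> 'n::finite \<Rightarrow> 'n \<Rightarrow> real"
  assumes "\<And>r c. (\<lambda>z. G z r c) differentiable (at y)"
  shows "(\<lambda>z. detm (G z)) differentiable (at y)"
  using D_deriv[OF assms] by (rule differentiableI)

lemma pd_const: "pd i (\<lambda>y. c::real) x = 0"
  using pd_has[OF has_derivative_const[of c "at x"]] by simp

lemma frame_EE:
  fixes e :: "'n::finite \<Rightarrow> real^'n" and g a :: "'n \<Rightarrow> 'n \<Rightarrow> real"
  assumes orth: "\<forall>a b. ev2 g (e a) (e b) = (if a = b then 1 else 0)"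
    and gA: "\<And>l k. (\<Sum>n\<in>UNIV. g l n * a n k) = (if l = k then 1 else 0)"
  shows "(\<Sum>b\<in>UNIV. e b $ i * e b $ j) = a i j"
proof -
  let ?E = "(\<chi> i b. e b $ i) :: real^'n^'n"
  let ?g = "(\<chi> i j. g i j) :: real^'n^'n"
  let ?a = "(\<chi> i j. a i j) :: real^'n^'n"
  have ga: "?g ** ?a = mat 1" using gA by (simp add: matrix_matrix_mult_def mat_def vec_eq_iff)
  have "(transpose ?E ** ?g ** ?E) $ b $ c = ev2 g (e b) (e c)" for b c
  proof -
    have "(transpose ?E ** ?g ** ?E) $ b $ c = (\<Sum>k\<in>UNIV. (\<Sum>l\<in>UNIV. e b $ l * g l k) * e c $ k)"
      by (simp add: matrix_matrix_mult_def transpose_def)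
    also have "\<dots> = (\<Sum>k\<in>UNIV. \<Sum>l\<in>UNIV. e b $ l * g l k * e c $ k)"
      by (simp only: sum_distrib_right)
    also have "\<dots> = (\<Sum>k\<in>UNIV. \<Sum>l\<in>UNIV. e b $ l * e c $ k * g l k)"
      by (simp only: mult_ac)
    also have "\<dots> = (\<Sum>l\<in>UNIV. \<Sum>k\<in>UNIV. e b $ l * e c $ k * g l k)"
      by (rule sum.swap)
    finally show ?thesis unfolding ev2_def .
  qed
  then have "transpose ?E ** ?g ** ?E = mat 1"
    using orth by (simp add: vec_eq_iff mat_def)
  then have "(transpose ?E ** ?g) ** ?E = mat 1" by (simp add: matrix_mul_assoc)
  then have "?E ** (transpose ?E ** ?g) = mat 1"
    using matrix_left_right_inverse by blast
  then have "(?E ** transpose ?E) ** ?g = mat 1" by (simp add: matrix_mul_assoc)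
  note Eg = this
  have "?E ** transpose ?E = (?E ** transpose ?E) ** (?g ** ?a)" using ga by (simp add: matrix_mul_rid)
  also have "\<dots> = ((?E ** transpose ?E) ** ?g) ** ?a" by (simp add: matrix_mul_assoc)
  also have "\<dots> = ?a" using Eg by (simp add: matrix_mul_lid)
  finally have EE: "?E ** transpose ?E = ?a" .
  have "(?E ** transpose ?E) $ i $ j = (\<Sum>b\<in>UNIV. e b $ i * e b $ j)"
    by (simp add: matrix_matrix_mult_def transpose_def)
  then show ?thesis using EE by simp
qed


theorem proposition11p2:
  fixes U :: "(real^'n::finite) set"
    and G :: "real^'n \<Rightarrow> 'n \<Rightarrow> 'n \<Rightarrow> real"
    and Gam :: "real^'n \<Rightarrow> 'n \<Rightarrow> 'n \<Rightarrow> 'n \<Rightarrow> real"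
    and p :: "real^'n"
    and e :: "'n \<Rightarrow> real^'n"
  assumes "statistical_structure U G Gam"
    and "trace_free U G Gam"
    and "p \<in> U"
    and "\<forall>a b. ev2 (G p) (e a) (e b) = (if a = b then 1 else 0)"
  shows "(\<Sum>a\<in>UNIV. \<Sum>b\<in>UNIV. ev4 (nabla2_g G Gam p) (e a) (e a) (e b) (e b))
       = (\<Sum>a\<in>UNIV. \<Sum>b\<in>UNIV. \<Sum>c\<in>UNIV. (ev3 (nabla_g G Gam p) (e a) (e b) (e c))^2)"
proof -
  note ss = assms(1) and tf = assms(2) and pU = assms(3) and orth = assms(4)
  have opn: "open U" using ss unfolding statistical_structure_def by blast
  have DG: "\<And>m n. (\<lambda>y. G y m n) differentiable (at p)"
    using ss pU unfolding statistical_structure_def by auto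
  have DPG: "\<And>i j k. pd i (\<lambda>z. G z j k) differentiable (at p)"
    using ss pU unfolding statistical_structure_def by auto
  have DGam: "\<And>i j l. (\<lambda>y. Gam y i j l) differentiable (at p)"
    using ss pU unfolding statistical_structure_def by auto
  have Dnz: "detm (G p) \<noteq> 0" by (rule ss_D_nz[OF ss pU])
  have DA: "\<And>j k. (\<lambda>y. Ainv G y j k) differentiable (at p)"
    unfolding Ainv_def using cof_diff[OF DG] detm_diff[OF DG] Dnz
    by (intro differentiable_divide) auto
  have DC: "\<And>i j k. (\<lambda>y. nabla_g G Gam y i j k) differentiable (at p)"
    unfolding nabla_g_def using DG DPG DGam
    by (intro differentiable_diff differentiable_sum ballI differentiable_mult finite) auto
  define a where "a = Ainv G p"
  define g where "g = G p"
  define c where "c = nabla_g G Gam p"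
  define Gm where "Gm = Gam p"
  define dA where "dA = (\<lambda>h j k. pd h (\<lambda>y. Ainv G y j k) p)"
  define dg where "dg = (\<lambda>h m n. pd h (\<lambda>y. G y m n) p)"
  define pdC where "pdC = (\<lambda>h i j k. pd h (\<lambda>y. nabla_g G Gam y i j k) p)"
  define N where "N = nabla2_g G Gam p"
  have dT: "(\<Sum>j\<in>UNIV. \<Sum>k\<in>UNIV. dA h j k * c i j k + a j k * pdC h i j k) = 0" for h i
  proof -
    have "pd h (\<lambda>y. \<Sum>j\<in>UNIV. \<Sum>k\<in>UNIV. Ainv G y j k * nabla_g G Gam y i j k) p = 0"
      by (rule pd_zero_on[OF opn pU]) (rule trace_T[OF ss tf])
    moreover have "pd h (\<lambda>y. \<Sum>j\<in>UNIV. \<Sum>k\<in>UNIV. Ainv G y j k * nabla_g G Gam y i j k) p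
        = (\<Sum>j\<in>UNIV. pd h (\<lambda>y. \<Sum>k\<in>UNIV. Ainv G y j k * nabla_g G Gam y i j k) p)"
      by (rule pd_sum) (use DA DC in auto)
    moreover have "\<And>j. pd h (\<lambda>y. \<Sum>k\<in>UNIV. Ainv G y j k * nabla_g G Gam y i j k) p
        = (\<Sum>k\<in>UNIV. pd h (\<lambda>y. Ainv G y j k * nabla_g G Gam y i j k) p)"
      by (rule pd_sum) (use DA DC in auto)
    moreover have "\<And>j k. pd h (\<lambda>y. Ainv G y j k * nabla_g G Gam y i j k) p
        = dA h j k * c i j k + a j k * pdC h i j k"
      unfolding dA_def c_def a_def pdC_def by (rule pd_mult[OF DA DC])
    ultimately show ?thesis by simp
  qed
  have dId: "(\<Sum>j\<in>UNIV. dg h m j * a j k + g m j * dA h j k) = 0" for h m k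
  proof -
    have "pd h (\<lambda>y. (\<Sum>j\<in>UNIV. G y m j * Ainv G y j k) - (if m = k then 1 else 0)) p = 0"
      by (rule pd_zero_on[OF opn pU]) (simp add: A_right[OF ss])
    moreover have "pd h (\<lambda>y. (\<Sum>j\<in>UNIV. G y m j * Ainv G y j k) - (if m = k then 1 else 0)) p
        = pd h (\<lambda>y. \<Sum>j\<in>UNIV. G y m j * Ainv G y j k) p - pd h (\<lambda>y. (if m = k then 1 else 0)) p"
      by (rule pd_diff) (use DA DG in auto)
    moreover have "pd h (\<lambda>y. \<Sum>j\<in>UNIV. G y m j * Ainv G y j k) p = (\<Sum>j\<in>UNIV. pd h (\<lambda>y. G y m j * Ainv G y j k) p)"
      by (rule pd_sum) (use DA DG in auto)
    moreover have "\<And>j. pd h (\<lambda>y. G y m j * Ainv G y j k) p = dg h m j * a j k + g m j * dA h j k"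
      unfolding dA_def dg_def a_def g_def by (rule pd_mult[OF DG DA])
    ultimately show ?thesis by (simp add: pd_const)
  qed
  have gA: "\<And>l k. (\<Sum>n\<in>UNIV. g l n * a n k) = (if l = k then 1 else 0)"
    unfolding g_def a_def by (rule A_right[OF ss pU])
  have Ag: "\<And>j l. (\<Sum>m\<in>UNIV. a j m * g m l) = (if j = l then 1 else 0)"
    unfolding g_def a_def by (rule A_left[OF ss pU])
  have dAf: "dA h l k = - (\<Sum>m\<in>UNIV. \<Sum>n\<in>UNIV. a l m * dg h m n * a n k)" for h l k
  proof -
    have "0 = (\<Sum>m\<in>UNIV. a l m * (\<Sum>j\<in>UNIV. dg h m j * a j k + g m j * dA h j k))"
      by (simp add: dId)
    also have "\<dots> = (\<Sum>m\<in>UNIV. \<Sum>j\<in>UNIV. a l m * dg h m j * a j k) + (\<Sum>m\<in>UNIV. \<Sum>j\<in>UNIV. a l m * g m j * dA h j k)"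
      by (simp add: sum_distrib_left sum.distrib algebra_simps)
    also have "(\<Sum>m\<in>UNIV. \<Sum>j\<in>UNIV. a l m * g m j * dA h j k) = (\<Sum>j\<in>UNIV. \<Sum>m\<in>UNIV. a l m * g m j * dA h j k)"
      by (rule sum.swap)
    also have "\<dots> = (\<Sum>j\<in>UNIV. (\<Sum>m\<in>UNIV. a l m * g m j) * dA h j k)"
      by (simp add: sum_distrib_right)
    also have "\<dots> = dA h l k"
      by (simp add: Ag if_distrib[of "\<lambda>x. x * _"] cong: if_cong)
    finally show ?thesis by (simp add: eq_neg_iff_add_eq_0 add.commute)
  qed
  have dgf: "dg h m n = c h m n + (\<Sum>l\<in>UNIV. Gm h m l * g l n) + (\<Sum>l\<in>UNIV. Gm h n l * g m l)" for h m n
    unfolding dg_def c_def Gm_def g_def nabla_g_def by simp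
  have T0: "\<And>l. (\<Sum>j\<in>UNIV. \<Sum>k\<in>UNIV. a j k * c l j k) = 0"
    unfolding a_def c_def by (rule trace_T[OF ss tf pU])
  have Nf: "\<And>h i j k. N h i j k = pdC h i j k - (\<Sum>l\<in>UNIV. Gm h i l * c l j k)
               - (\<Sum>l\<in>UNIV. Gm h j l * c i l k) - (\<Sum>l\<in>UNIV. Gm h k l * c i j l)"
    unfolding N_def pdC_def Gm_def c_def nabla2_g_def by simp
  have key: "\<And>h i. (\<Sum>j\<in>UNIV. \<Sum>k\<in>UNIV. a j k * N h i j k)
       = (\<Sum>j\<in>UNIV. \<Sum>k\<in>UNIV. \<Sum>m\<in>UNIV. \<Sum>n\<in>UNIV. a j m * c h m n * a n k * c i j k)"
    by (rule key_alg[OF dT dAf dgf gA Ag T0 Nf])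
  have EE: "\<And>i j. (\<Sum>b\<in>UNIV. e b $ i * e b $ j) = a i j"
    by (rule frame_EE[OF orth[folded g_def] gA])
  have Asym: "\<And>i j. a i j = a j i"
    unfolding EE[symmetric] by (simp add: mult.commute)
  have "(\<Sum>a\<in>UNIV. \<Sum>b\<in>UNIV. ev4 N (e a) (e a) (e b) (e b))
       = (\<Sum>a\<in>UNIV. \<Sum>b\<in>UNIV. \<Sum>c'\<in>UNIV. (ev3 c (e a) (e b) (e c'))^2)"
    by (rule frame_alg[OF EE Asym key])
  then show ?thesis unfolding N_def c_def .
qed

end
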